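(* Let $K$ be a field, $P=K[x_1,\dots,x_n]$, $g_1,\dots,g_r\in P$, $I=\langle g_1,\dots,g_r\rangle$, and let $Z=(z_1,\dots,z_s)$ be a tuple of distinct indeterminates among $x_1,\dots,x_n$. The procedure $\mathrm{CHECK}$ applied to $(g_1,\dots,g_r)$ and $Z$ terminates after finitely many steps and returns either ``Fail'' or a tuple $W=(w_1,\dots,w_n)\in\mathbb{N}^n$. If it returns a tuple $W$, then there exist $f_1,\dots,f_s\in\langle g_1,\dots,g_r\rangle_K$ such that for every term ordering $\sigma$ on $P$ compatible with the grading given by $W$ we have $\operatorname{LT}_\sigma(f_i)=z_i$ for $i=1,\dots,s$; in particular $(f_1,\dots,f_s)$ is a $Z$-separating tuple of polynomials in $I$.
   Context: $\operatorname{Supp}(f)$ is the set of terms occurring in $f$; $\operatorname{Lin}(f)$ is the homogeneous degree-1 component of $f$; $\langle\cdot\rangle_K$ denotes $K$-linear span. A tuple $(f_1,\dots,f_s)$ of polynomials in an ideal $I$ is $Z$-separating if there is a term ordering $\sigma$ with $\operatorname{LT}_\sigma(f_i)=z_i$ for all $i$. For $W=(w_1,\dots,w_n)$, the $W$-degree of a term $x_1^{a_1}\cdots x_n^{a_n}$ is $\sum w_ia_i$; a term ordering $\sigma$ is compatible with the grading given by $W$ if $t>_\sigma t'$ whenever the $W$-degree of $t$ exceeds that of $t'$. Procedure $\mathrm{LI}$ (linear interreduction), applied to a tuple $Z=(z_1,\dots,z_s)$ of distinct indeterminates and polynomials $g_1,\dots,g_r$: let $t_1>\dots>t_m$ (lexicographic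 order, $x_1>\dots>x_n$) be the terms of $\bigcup_j\operatorname{Supp}(g_j)$ other than $z_1,\dots,z_s$; form the coefficient matrix $M$ of $g_1,\dots,g_r$ w.r.t. column order $(z_1,\dots,z_s,t_1,\dots,t_m)$; output the polynomials whose coefficient vectors are the nonzero rows of the reduced row echelon form of $M$, in order. Procedure $\mathrm{CHECK}$ on input $(g_1,\dots,g_r)$ and $Z$: (1) set $w_1=\dots=w_n=0$, $\delta=\max_j\deg(g_j)$, $d=1$. (2) In each $g_j$ delete every monomial not divisible by some indeterminate of $Z$. (3) If $\dim_K\langle\operatorname{Lin}(g_1),\dots,\operatorname{Lin}(g_r)\rangle_K<\#Z$, return ``Fail''. (4) Repeat: (i) replace the current list $g_1,\dots,g_r$ by the output of $\mathrm{LI}$ applied to the current $Z$ and the current list; (ii) let $\widetilde Z$ be the set of indeterminates of the current $Z$ that occur as elements of the current list; (iii) if $\widetilde Z=\emptyset$, return ``Fail''; (iv) for each $z\in\widetilde Z$, say $z=x_k$, set $w_k=d$ and remove $z$ from $Z$; (v) in each current $g_j$ delete every monomial not divisible by some indeterminate of the (updated) $Z$; (vi) replace $d$ by $\delta d+1$; until $Z$ is empty. (5) Return $W=(w_1,\dots,w_n)$. *)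

theory Defs
  imports "HOL-Library.Poly_Mapping" "HOL-Library.List_Lexorder" "HOL-Library.While_Combinator"
    "Jordan_Normal_Form.Gauss_Jordan_Elimination"
begin

text \<open>Terms (power products) are exponent vectors \<open>nat \<Rightarrow>\<^sub>0 nat\<close>; the indeterminate
  x_(k+1) of the paper is index k.
  The polynomial ring P = K[x_1,...,x_n] consists of those polynomials all of whose
  terms only involve the indices below n.\<close>

type_synonym term_ = "nat \<Rightarrow>\<^sub>0 nat"
type_synonym 'a mpoly = "term_ \<Rightarrow>\<^sub>0 'a"

definition terms_in :: "nat \<Rightarrow> term_ set" where
  "terms_in n = {t. Poly_Mapping.keys t \<subseteq> {..<n}}"

definition polys_in :: "nat \<Rightarrow> ('a::zero) mpoly set" where
  "polys_in n = {p. Poly_Mapping.keys p \<subseteq> terms_in n}"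

definition var_term :: "nat \<Rightarrow> term_" where
  "var_term k = Poly_Mapping.single k 1"

definition var_poly :: "nat \<Rightarrow> ('a::{zero,one}) mpoly" where
  "var_poly k = Poly_Mapping.single (var_term k) 1"

definition tdeg :: "term_ \<Rightarrow> nat" where
  "tdeg t = (\<Sum>i\<in>Poly_Mapping.keys t. Poly_Mapping.lookup t i)"

definition pdeg :: "('a::zero) mpoly \<Rightarrow> nat" where
  "pdeg p = Max (insert 0 (tdeg ` Poly_Mapping.keys p))"

definition restrict_terms :: "(term_ \<Rightarrow> bool) \<Rightarrow> ('a::comm_monoid_add) mpoly \<Rightarrow> 'a mpoly" where
  "restrict_terms Q p = (\<Sum>t\<in>{t\<in>Poly_Mapping.keys p. Q t}. Poly_Mapping.single t (Poly_Mapping.lookup p t))"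

definition del_nondiv :: "nat list \<Rightarrow> ('a::comm_monoid_add) mpoly \<Rightarrow> 'a mpoly" where
  "del_nondiv Z p = restrict_terms (\<lambda>t. \<exists>k\<in>set Z. Poly_Mapping.lookup t k > 0) p"

definition Lin :: "('a::comm_monoid_add) mpoly \<Rightarrow> 'a mpoly" where
  "Lin p = restrict_terms (\<lambda>t. tdeg t = 1) p"

definition pscale :: "'a::field \<Rightarrow> 'a mpoly \<Rightarrow> 'a mpoly" where
  "pscale c p = Poly_Mapping.map (\<lambda>a. c * a) p"

definition span_K :: "('a::field) mpoly list \<Rightarrow> 'a mpoly set" where
  "span_K gs = {f. \<exists>c::nat \<Rightarrow> 'a. f = (\<Sum>j<length gs. pscale (c j) (gs ! j))}"

definition dim_span_K :: "('a::field) mpoly list \<Rightarrow> nat" where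
  "dim_span_K gs = vector_space.dim pscale (set gs)"

definition ideal_gen :: "nat \<Rightarrow> ('a::field) mpoly list \<Rightarrow> 'a mpoly set" where
  "ideal_gen n gs = {f. \<exists>h::nat \<Rightarrow> 'a mpoly. (\<forall>j<length gs. h j \<in> polys_in n) \<and>
                          f = (\<Sum>j<length gs. h j * gs ! j)}"

text \<open>Lexicographic key of a term in n indeterminates, x_1 > ... > x_n.\<close>
definition lex_key :: "nat \<Rightarrow> term_ \<Rightarrow> nat list" where
  "lex_key n t = map (Poly_Mapping.lookup t) [0..<n]"

definition LI_other_terms :: "nat \<Rightarrow> nat list \<Rightarrow> ('a::zero) mpoly list \<Rightarrow> term_ list" where
  "LI_other_terms n Z gs =
     rev (sort_key (lex_key n)
       (sorted_list_of_set ((\<Union>g\<in>set gs. Poly_Mapping.keys g) - var_term ` set Z)))"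

definition LI_columns :: "nat \<Rightarrow> nat list \<Rightarrow> ('a::zero) mpoly list \<Rightarrow> term_ list" where
  "LI_columns n Z gs = map var_term Z @ LI_other_terms n Z gs"

definition coeff_matrix :: "term_ list \<Rightarrow> ('a::zero) mpoly list \<Rightarrow> 'a mat" where
  "coeff_matrix cs gs = mat (length gs) (length cs) (\<lambda>(i,j). Poly_Mapping.lookup (gs ! i) (cs ! j))"

definition row_poly :: "term_ list \<Rightarrow> ('a::comm_monoid_add) mat \<Rightarrow> nat \<Rightarrow> 'a mpoly" where
  "row_poly cs R i = (\<Sum>j<length cs. Poly_Mapping.single (cs ! j) (R $$ (i, j)))"

text \<open>gauss_jordan_single computes the reduced row echelon form (pivots 1, all other
  entries of pivot columns 0, see row_echelon_form in Jordan_Normal_Form).\<close>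
definition LI :: "nat \<Rightarrow> nat list \<Rightarrow> ('a::field) mpoly list \<Rightarrow> 'a mpoly list" where
  "LI n Z gs =
     (let cs = LI_columns n Z gs;
          R = gauss_jordan_single (coeff_matrix cs gs)
      in map (row_poly cs R)
           (filter (\<lambda>i. \<exists>j<length cs. R $$ (i, j) \<noteq> 0) [0..<dim_row R]))"

datatype check_result = Fail | Weights "nat list"

text \<open>State of the loop in step (4): current list, current Z, current weights, current d,
  status (None = running, Some False = Fail returned, Some True = loop finished).\<close>
type_synonym 'a check_state = "'a mpoly list \<times> nat list \<times> (nat \<Rightarrow> nat) \<times> nat \<times> bool option"

definition check_body :: "nat \<Rightarrow> nat \<Rightarrow> ('a::field) check_state \<Rightarrow> 'a check_state" where
  "check_body n \<delta> st =
     (case st of (gs, Z, w, d, _) \<Rightarrow>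
       (let gs1 = LI n Z gs;
            Zt = filter (\<lambda>z. var_poly z \<in> set gs1) Z
        in if Zt = [] then (gs1, Z, w, d, Some False)
           else (let w1 = (\<lambda>k. if k \<in> set Zt then d else w k);
                     Z1 = filter (\<lambda>z. z \<notin> set Zt) Z;
                     gs2 = map (del_nondiv Z1) gs1;
                     d1 = \<delta> * d + 1
                 in (gs2, Z1, w1, d1, if Z1 = [] then Some True else None))))"

definition check_running :: "('a::field) check_state \<Rightarrow> bool" where
  "check_running st = (case st of (_, _, _, _, s) \<Rightarrow> s = None)"

text \<open>CHECK n gs Z = None means that the procedure does not terminate;
  Some r means it terminates with result r.\<close>
definition CHECK :: "nat \<Rightarrow> ('a::field) mpoly list \<Rightarrow> nat list \<Rightarrow> check_result option" where
  "CHECK n gs Z =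
     (let \<delta> = Max (insert 0 (pdeg ` set gs));
          gs0 = map (del_nondiv Z) gs
      in if dim_span_K (map Lin gs0) < length Z then Some Fail
         else (case while_option check_running (check_body n \<delta>) (gs0, Z, (\<lambda>_. 0), 1, None) of
                 None \<Rightarrow> None
               | Some (_, _, w, _, s) \<Rightarrow>
                   Some (if s = Some True then Weights (map w [0..<n]) else Fail)))"

definition term_ordering :: "nat \<Rightarrow> (term_ \<Rightarrow> term_ \<Rightarrow> bool) \<Rightarrow> bool" where
  "term_ordering n ord \<longleftrightarrow>
     (\<forall>t\<in>terms_in n. ord t t) \<and>
     (\<forall>t\<in>terms_in n. \<forall>u\<in>terms_in n. ord t u \<and> ord u t \<longrightarrow> t = u) \<and>
     (\<forall>t\<in>terms_in n. \<forall>u\<in>terms_in n. \<forall>v\<in>terms_in n. ord t u \<and> ord u v \<longrightarrow> ord t v) \<and>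
     (\<forall>t\<in>terms_in n. \<forall>u\<in>terms_in n. ord t u \<or> ord u t) \<and>
     (\<forall>t\<in>terms_in n. ord 0 t) \<and>
     (\<forall>t\<in>terms_in n. \<forall>u\<in>terms_in n. \<forall>v\<in>terms_in n. ord t u \<longrightarrow> ord (t + v) (u + v))"

definition LT :: "(term_ \<Rightarrow> term_ \<Rightarrow> bool) \<Rightarrow> ('a::zero) mpoly \<Rightarrow> term_" where
  "LT ord f = (THE t. t \<in> Poly_Mapping.keys f \<and> (\<forall>u\<in>Poly_Mapping.keys f. ord u t))"

definition W_deg :: "nat list \<Rightarrow> term_ \<Rightarrow> nat" where
  "W_deg W t = (\<Sum>i<length W. W ! i * Poly_Mapping.lookup t i)"

definition compatible_with_grading :: "nat \<Rightarrow> nat list \<Rightarrow> (term_ \<Rightarrow> term_ \<Rightarrow> bool) \<Rightarrow> bool" where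
  "compatible_with_grading n W ord \<longleftrightarrow>
     (\<forall>t\<in>terms_in n. \<forall>u\<in>terms_in n. W_deg W t > W_deg W u \<longrightarrow> ord u t \<and> t \<noteq> u)"

end

theory Submission imports Defs "HOL-Library.Fun_Lexorder" begin

lemma lookup_pscale[simp]: "Poly_Mapping.lookup (pscale c p) t = c * Poly_Mapping.lookup p t"
  by (simp add: pscale_def Poly_Mapping.map.rep_eq when_def)

lemma pscale_diff: "pscale c (a - b) = pscale c a - pscale c b"
  by (rule poly_mapping_eqI) (simp add: Poly_Mapping.lookup_minus algebra_simps)

lemma sum_pscale_diff: "(\<Sum>k\<in>A. pscale (c k) (f k)) - (\<Sum>k\<in>A. pscale (c k) (g k)) = (\<Sum>k\<in>A. pscale (c k) (f k - g k))"
  by (simp add: pscale_diff sum_subtractf)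

lemma keys_pscale: "Poly_Mapping.keys (pscale c p) \<subseteq> Poly_Mapping.keys p"
  by (auto simp: in_keys_iff)

lemma keys_lincomb: "Poly_Mapping.keys (\<Sum>k\<in>A. pscale (c k) (f k)) \<subseteq> (\<Union>k\<in>A. Poly_Mapping.keys (f k))"
  using keys_sum[of "\<lambda>k. pscale (c k) (f k)" A] keys_pscale by blast

lemma sum_nth_distinct: "distinct cs \<Longrightarrow> (\<Sum>j<length cs. F (cs ! j)) = (\<Sum>t\<in>set cs. F t)"
proof -
  assume d: "distinct cs"
  have "(\<Sum>t\<in>set cs. F t) = (\<Sum>t\<in>(!) cs ` {..<length cs}. F t)"
    by (rule arg_cong[where f="sum F"]) (auto simp: set_conv_nth)
  also have "\<dots> = (\<Sum>j<length cs. F (cs ! j))"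
    by (rule sum.reindex_cong[OF _ refl refl]) (use d in \<open>auto simp: inj_on_def nth_eq_iff_index_eq\<close>)
  finally show ?thesis by simp
qed

lemma sum_single_keys:
  assumes "finite S" "Poly_Mapping.keys g \<subseteq> S"
  shows "(\<Sum>t\<in>S. Poly_Mapping.single t (Poly_Mapping.lookup g t)) = g"
proof (rule poly_mapping_eqI)
  fix u
  have "Poly_Mapping.lookup (\<Sum>t\<in>S. Poly_Mapping.single t (Poly_Mapping.lookup g t)) u = (\<Sum>t\<in>S. if t = u then Poly_Mapping.lookup g t else 0)"
    by (simp add: Poly_Mapping.lookup_sum Poly_Mapping.lookup_single when_def)
  also have "\<dots> = Poly_Mapping.lookup g u"
    using assms by (auto simp: sum.delta' in_keys_iff)
  finally show "Poly_Mapping.lookup (\<Sum>t\<in>S. Poly_Mapping.single t (Poly_Mapping.lookup g t)) u = Poly_Mapping.lookup g u" .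
qed

lemma span_lincomb:
  assumes "\<forall>k<m. h k \<in> span_K gs"
  shows "(\<Sum>k<m. pscale (c k) (h k)) \<in> span_K gs"
proof -
  from assms have "\<forall>k. \<exists>e. k < m \<longrightarrow> h k = (\<Sum>j<length gs. pscale (e j) (gs ! j))"
    by (auto simp: span_K_def)
  then obtain e where e: "\<And>k. k < m \<Longrightarrow> h k = (\<Sum>j<length gs. pscale (e k j) (gs ! j))"
    by metis
  have "(\<Sum>k<m. pscale (c k) (h k)) = (\<Sum>j<length gs. pscale (\<Sum>k<m. c k * e k j) (gs ! j))"
  proof (rule poly_mapping_eqI)
    fix t
    have "Poly_Mapping.lookup (\<Sum>k<m. pscale (c k) (h k)) t = (\<Sum>k<m. c k * (\<Sum>j<length gs. e k j * Poly_Mapping.lookup (gs ! j) t))"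
      by (simp add: Poly_Mapping.lookup_sum e)
    also have "\<dots> = (\<Sum>j<length gs. (\<Sum>k<m. c k * e k j) * Poly_Mapping.lookup (gs ! j) t)"
      by (simp add: sum_distrib_left sum_distrib_right mult.assoc sum.swap[of _ "{..<m}"])
    also have "\<dots> = Poly_Mapping.lookup (\<Sum>j<length gs. pscale (\<Sum>k<m. c k * e k j) (gs ! j)) t"
      by (simp add: Poly_Mapping.lookup_sum)
    finally show "Poly_Mapping.lookup (\<Sum>k<m. pscale (c k) (h k)) t = Poly_Mapping.lookup (\<Sum>j<length gs. pscale (\<Sum>k<m. c k * e k j) (gs ! j)) t" .
  qed
  then show ?thesis by (auto simp: span_K_def)
qed

lemma pscale_single: "pscale c (Poly_Mapping.single t v) = Poly_Mapping.single t (c * v)"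
  by (rule poly_mapping_eqI) (simp add: Poly_Mapping.lookup_single when_def)

lemma pscale_sum: "pscale c (\<Sum>j\<in>A. f j) = (\<Sum>j\<in>A. pscale c (f j))"
  by (rule poly_mapping_eqI) (simp add: Poly_Mapping.lookup_sum sum_distrib_left)

lemma single_sum: "Poly_Mapping.single t (\<Sum>k\<in>A. f k) = (\<Sum>k\<in>A. Poly_Mapping.single t (f k))"
  by (rule poly_mapping_eqI) (simp add: Poly_Mapping.lookup_sum Poly_Mapping.lookup_single when_def)

lemma inj_var_term: "inj var_term"
  by (rule injI) (metis var_term_def Poly_Mapping.lookup_single_eq Poly_Mapping.lookup_single_not_eq one_neq_zero)

lemma LI_columns_props:
  assumes "distinct Z"
  shows "distinct (LI_columns n Z gl)" "\<And>g. g \<in> set gl \<Longrightarrow> Poly_Mapping.keys g \<subseteq> set (LI_columns n Z gl)"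
proof -
  let ?S = "(\<Union>g\<in>set gl. Poly_Mapping.keys g) - var_term ` set Z"
  have fin: "finite ?S" by auto
  have o: "set (LI_other_terms n Z gl) = ?S" "distinct (LI_other_terms n Z gl)"
    using fin by (auto simp: LI_other_terms_def)
  show "distinct (LI_columns n Z gl)"
    using o assms inj_var_term by (auto simp: LI_columns_def distinct_map inj_on_def inj_def)
  show "\<And>g. g \<in> set gl \<Longrightarrow> Poly_Mapping.keys g \<subseteq> set (LI_columns n Z gl)"
    using o by (auto simp: LI_columns_def)
qed

lemma LI_comb:
  assumes "distinct Z" "q \<in> set (LI n Z gl)"
  shows "\<exists>c. q = (\<Sum>k<length gl. pscale (c k) (gl ! k))"
proof -
  define cs where "cs = LI_columns n Z gl"
  define A where "A = coeff_matrix cs gl"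
  define R where "R = gauss_jordan_single A"
  have A: "A \<in> carrier_mat (length gl) (length cs)"
    by (simp add: A_def coeff_matrix_def)
  note gj = gauss_jordan_single[OF A R_def[symmetric]]
  from gj(4) obtain P where P: "R = P * A" "P \<in> carrier_mat (length gl) (length gl)" by blast
  from gj(2) have dR: "dim_row R = length gl" by auto
  from assms(2) obtain i where i: "i < length gl" and q: "q = row_poly cs R i"
    by (auto simp: LI_def Let_def cs_def R_def A_def dR[unfolded R_def A_def cs_def])
  have dc: "distinct cs" unfolding cs_def by (rule LI_columns_props(1)[OF assms(1)])
  have kc: "\<And>g. g \<in> set gl \<Longrightarrow> Poly_Mapping.keys g \<subseteq> set cs"
    unfolding cs_def by (rule LI_columns_props(2)[OF assms(1)])
  have Rij: "R $$ (i, j) = (\<Sum>k<length gl. P $$ (i, k) * Poly_Mapping.lookup (gl ! k) (cs ! j))"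
    if j: "j < length cs" for j
    using P i j A by (simp add: index_mult_mat scalar_prod_def A_def coeff_matrix_def lessThan_atLeast0)
  have "q = (\<Sum>j<length cs. Poly_Mapping.single (cs ! j) (\<Sum>k<length gl. P $$ (i, k) * Poly_Mapping.lookup (gl ! k) (cs ! j)))"
    unfolding q row_poly_def by (rule sum.cong) (auto simp: Rij)
  also have "\<dots> = (\<Sum>k<length gl. pscale (P $$ (i, k)) (\<Sum>j<length cs. Poly_Mapping.single (cs ! j) (Poly_Mapping.lookup (gl ! k) (cs ! j))))"
    by (simp add: single_sum pscale_sum pscale_single sum.swap[of _ "{..<length gl}"])
  also have "\<dots> = (\<Sum>k<length gl. pscale (P $$ (i, k)) (gl ! k))"
  proof (rule sum.cong[OF refl])
    fix k assume "k \<in> {..<length gl}"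
    then have "gl ! k \<in> set gl" by auto
    then show "pscale (P $$ (i, k)) (\<Sum>j<length cs. Poly_Mapping.single (cs ! j) (Poly_Mapping.lookup (gl ! k) (cs ! j))) = pscale (P $$ (i, k)) (gl ! k)"
      using sum_nth_distinct[OF dc, of "\<lambda>t. Poly_Mapping.single t (Poly_Mapping.lookup (gl ! k) t)"]
        sum_single_keys[of "set cs" "gl ! k"] kc by auto
  qed
  finally show ?thesis by (intro exI[of _ "\<lambda>k. P $$ (i, k)"])
qed

lemma lookup_restrict_terms: "Poly_Mapping.lookup (restrict_terms Q p) u = (if Q u then Poly_Mapping.lookup p u else 0)"
proof -
  have "Poly_Mapping.lookup (restrict_terms Q p) u = (\<Sum>t\<in>{t\<in>Poly_Mapping.keys p. Q t}. if t = u then Poly_Mapping.lookup p t else 0)"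
    by (simp add: restrict_terms_def Poly_Mapping.lookup_sum Poly_Mapping.lookup_single when_def)
  also have "\<dots> = (if Q u then Poly_Mapping.lookup p u else 0)"
    by (auto simp: in_keys_iff)
  finally show ?thesis .
qed

lemma lookup_del_nondiv: "Poly_Mapping.lookup (del_nondiv Z p) u = (if \<exists>k\<in>set Z. Poly_Mapping.lookup u k > 0 then Poly_Mapping.lookup p u else 0)"
  by (simp add: del_nondiv_def lookup_restrict_terms)

definition wd :: "nat \<Rightarrow> (nat \<Rightarrow> nat) \<Rightarrow> term_ \<Rightarrow> nat" where
  "wd n w t = (\<Sum>i<n. w i * Poly_Mapping.lookup t i)"

definition Sgood :: "nat \<Rightarrow> nat list \<Rightarrow> (nat \<Rightarrow> nat) \<Rightarrow> nat \<Rightarrow> term_ set" where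
  "Sgood n Zc w d = {u. (\<forall>k\<in>set Zc. Poly_Mapping.lookup u k = 0) \<and> wd n w u < d}"

definition found :: "nat \<Rightarrow> ('a::field) mpoly list \<Rightarrow> nat list \<Rightarrow> (nat \<Rightarrow> nat) \<Rightarrow> nat \<Rightarrow> bool" where
  "found n gs Zc w z \<longleftrightarrow> (\<exists>h\<in>span_K gs. Poly_Mapping.lookup h (var_term z) = 1 \<and>
     (\<forall>u\<in>Poly_Mapping.keys h. u \<noteq> var_term z \<longrightarrow> (\<forall>k\<in>set Zc. Poly_Mapping.lookup u k = 0) \<and> wd n w u < w z))"

definition UU :: "('a::zero) mpoly list \<Rightarrow> term_ set" where
  "UU gs = (\<Union>g\<in>set gs. Poly_Mapping.keys g)"

definition INV :: "nat \<Rightarrow> ('a::field) mpoly list \<Rightarrow> nat list \<Rightarrow> 'a check_state \<Rightarrow> bool" where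
  "INV n gs Z0 st = (case st of (gl, Zc, w, d, s) \<Rightarrow> s = Some False \<or> (
     (\<forall>p\<in>set gl. Poly_Mapping.keys p \<subseteq> UU gs \<and> (\<exists>h\<in>span_K gs. Poly_Mapping.keys (h - p) \<subseteq> Sgood n Zc w d)) \<and>
     set Zc \<subseteq> set Z0 \<and> distinct Zc \<and> (\<forall>k. w k < d) \<and>
     (\<forall>z\<in>set Z0 - set Zc. found n gs Zc w z) \<and> (s = Some True \<longrightarrow> Zc = [])))"

lemma wd_cong: "(\<And>i. Poly_Mapping.lookup u i \<noteq> 0 \<Longrightarrow> w1 i = w i) \<Longrightarrow> wd n w1 u = wd n w u"
  unfolding wd_def by (rule sum.cong) auto

lemma sum_lookup_le_tdeg: "(\<Sum>i<n. Poly_Mapping.lookup t i) \<le> tdeg t"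
proof -
  have "(\<Sum>i<n. Poly_Mapping.lookup t i) = (\<Sum>i\<in>{..<n} \<inter> Poly_Mapping.keys t. Poly_Mapping.lookup t i)"
    by (rule sum.mono_neutral_right) (auto simp: in_keys_iff)
  also have "\<dots> \<le> tdeg t" unfolding tdeg_def
    by (rule sum_mono2) auto
  finally show ?thesis .
qed

lemma wd_le: "(\<And>i. w i \<le> d) \<Longrightarrow> wd n w t \<le> d * tdeg t"
proof -
  assume "\<And>i. w i \<le> d"
  then have "wd n w t \<le> (\<Sum>i<n. d * Poly_Mapping.lookup t i)"
    unfolding wd_def by (intro sum_mono) auto
  also have "\<dots> \<le> d * tdeg t" using sum_lookup_le_tdeg[where n=n and t=t]
    by (simp add: sum_distrib_left[symmetric])
  finally show ?thesis .
qed

lemma LI_inv: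
  assumes "distinct Zc" "\<forall>p\<in>set gl. Poly_Mapping.keys p \<subseteq> UU gs \<and> (\<exists>h\<in>span_K gs. Poly_Mapping.keys (h - p) \<subseteq> S)"
    and "q \<in> set (LI n Zc gl)"
  shows "Poly_Mapping.keys q \<subseteq> UU gs \<and> (\<exists>h\<in>span_K gs. Poly_Mapping.keys (h - q) \<subseteq> S)"
proof -
  obtain c where q: "q = (\<Sum>k<length gl. pscale (c k) (gl ! k))"
    using LI_comb[OF assms(1,3)] by blast
  have "\<forall>k. \<exists>h. k < length gl \<longrightarrow> h \<in> span_K gs \<and> Poly_Mapping.keys (h - gl ! k) \<subseteq> S"
    using assms(2) by (meson nth_mem)
  then obtain h where h: "\<And>k. k < length gl \<Longrightarrow> h k \<in> span_K gs \<and> Poly_Mapping.keys (h k - gl ! k) \<subseteq> S"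
    by metis
  have "Poly_Mapping.keys q \<subseteq> UU gs"
    using keys_lincomb[of c "\<lambda>k. gl ! k" "{..<length gl}"] assms(2) q by fastforce
  moreover have "(\<Sum>k<length gl. pscale (c k) (h k)) \<in> span_K gs"
    by (rule span_lincomb) (use h in auto)
  moreover have "Poly_Mapping.keys ((\<Sum>k<length gl. pscale (c k) (h k)) - q) \<subseteq> S"
    unfolding q sum_pscale_diff using keys_lincomb[of c "\<lambda>k. h k - gl ! k" "{..<length gl}"] h by fastforce
  ultimately show ?thesis by blast
qed

lemma lookup_var_poly: "Poly_Mapping.lookup (var_poly z :: ('a::{zero,one}) mpoly) u = (if u = var_term z then 1 else 0)"
  by (simp add: var_poly_def Poly_Mapping.lookup_single when_def)

lemma keys_var_poly: "Poly_Mapping.keys (var_poly z :: ('a::{zero_neq_one}) mpoly) = {var_term z}"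
  by (simp add: var_poly_def)

lemma lookup_var_term: "Poly_Mapping.lookup (var_term z) k = (if k = z then 1 else 0)"
  by (simp add: var_term_def Poly_Mapping.lookup_single when_def)

lemma tdeg_var_term: "tdeg (var_term z) = 1"
  by (simp add: tdeg_def var_term_def)

lemma step_inv:
  assumes inv: "INV n gs Z0 st" and run: "check_running st"
    and hU: "\<forall>t\<in>UU gs. tdeg t \<le> \<delta>"
  shows "INV n gs Z0 (check_body n \<delta> st)"
proof -
  obtain gl Zc w d s where st: "st = (gl, Zc, w, d, s)" by (cases st) auto
  with run have s: "s = None" by (simp add: check_running_def)
  from inv have I1: "\<forall>p\<in>set gl. Poly_Mapping.keys p \<subseteq> UU gs \<and> (\<exists>h\<in>span_K gs. Poly_Mapping.keys (h - p) \<subseteq> Sgood n Zc w d)"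
    and I2: "set Zc \<subseteq> set Z0" and I3: "distinct Zc" and I4: "\<forall>k. w k < d"
    and I5: "\<forall>z\<in>set Z0 - set Zc. found n gs Zc w z"
    using st s by (simp_all add: INV_def)
  define gs1 where "gs1 = LI n Zc gl"
  define Zt where "Zt = filter (\<lambda>z. var_poly z \<in> set gs1) Zc"
  have A: "\<forall>q\<in>set gs1. Poly_Mapping.keys q \<subseteq> UU gs \<and> (\<exists>h\<in>span_K gs. Poly_Mapping.keys (h - q) \<subseteq> Sgood n Zc w d)"
    using LI_inv[OF I3 I1] gs1_def by blast
  show ?thesis
  proof (cases "Zt = []")
    case True
    then show ?thesis by (simp add: check_body_def st Let_def gs1_def[symmetric] Zt_def[symmetric] INV_def)
  next
    case False
    define w1 where "w1 = (\<lambda>k. if k \<in> set Zt then d else w k)"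
    define Z1 where "Z1 = filter (\<lambda>z. z \<notin> set Zt) Zc"
    define gs2 where "gs2 = map (del_nondiv Z1) gs1"
    define d1 where "d1 = \<delta> * d + 1"
    have body: "check_body n \<delta> st = (gs2, Z1, w1, d1, if Z1 = [] then Some True else None)"
      using False by (simp add: check_body_def st Let_def gs1_def[symmetric] Zt_def[symmetric] w1_def Z1_def gs2_def d1_def)
    obtain z0 where z0: "z0 \<in> set Zt" using False by (cases Zt) auto
    then have "var_poly z0 \<in> set gs1" by (simp add: Zt_def)
    then have "Poly_Mapping.keys (var_poly z0 :: 'a mpoly) \<subseteq> UU gs" using A by blast
    then have "var_term z0 \<in> UU gs" by (simp add: keys_var_poly)
    then have dpos: "1 \<le> \<delta>" using hU tdeg_var_term by metis
    have w1le: "\<forall>i. w1 i \<le> d" using I4 by (auto simp: w1_def less_imp_le)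
    have dd1: "d < d1" using mult_le_mono1[OF dpos, of d] unfolding d1_def by linarith
    have Zt_sub: "set Zt \<subseteq> set Zc" by (auto simp: Zt_def)
    have Z1_sub: "set Z1 \<subseteq> set Zc" by (auto simp: Z1_def)
    have wdeq: "wd n w1 u = wd n w u" if "\<forall>k\<in>set Zc. Poly_Mapping.lookup u k = 0" for u
      by (rule wd_cong) (use that Zt_sub in \<open>auto simp: w1_def\<close>)
    have S_mono: "Sgood n Zc w d \<subseteq> Sgood n Z1 w1 d1"
    proof
      fix u assume "u \<in> Sgood n Zc w d"
      then have u: "\<forall>k\<in>set Zc. Poly_Mapping.lookup u k = 0" "wd n w u < d" by (auto simp: Sgood_def)
      then show "u \<in> Sgood n Z1 w1 d1" using Z1_sub wdeq[OF u(1)] dd1 by (auto simp: Sgood_def)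
    qed
    have P1: "\<forall>p\<in>set gs2. Poly_Mapping.keys p \<subseteq> UU gs \<and> (\<exists>h\<in>span_K gs. Poly_Mapping.keys (h - p) \<subseteq> Sgood n Z1 w1 d1)"
    proof
      fix p assume "p \<in> set gs2"
      then obtain q where q: "q \<in> set gs1" "p = del_nondiv Z1 q" by (auto simp: gs2_def)
      from A q obtain h where h: "h \<in> span_K gs" "Poly_Mapping.keys (h - q) \<subseteq> Sgood n Zc w d" and kq: "Poly_Mapping.keys q \<subseteq> UU gs" by blast
      have kp: "Poly_Mapping.keys p \<subseteq> Poly_Mapping.keys q" using q(2) by (auto simp: in_keys_iff lookup_del_nondiv split: if_splits)
      have "Poly_Mapping.keys (h - p) \<subseteq> Sgood n Z1 w1 d1"
      proof
        fix u assume u: "u \<in> Poly_Mapping.keys (h - p)"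
        show "u \<in> Sgood n Z1 w1 d1"
        proof (cases "(\<exists>k\<in>set Z1. Poly_Mapping.lookup u k > 0) \<or> u \<notin> Poly_Mapping.keys q")
          case True
          then have "Poly_Mapping.lookup (h - p) u = Poly_Mapping.lookup (h - q) u"
            using q(2) by (auto simp: Poly_Mapping.lookup_minus lookup_del_nondiv in_keys_iff)
          then have "u \<in> Poly_Mapping.keys (h - q)" using u by (simp add: in_keys_iff)
          then show ?thesis using h S_mono by blast
        next
          case False
          then have uq: "u \<in> Poly_Mapping.keys q" and nd: "\<forall>k\<in>set Z1. Poly_Mapping.lookup u k = 0" by auto
          then have tu: "tdeg u \<le> \<delta>" using kq hU by blast
          have "wd n w1 u \<le> d * tdeg u" by (rule wd_le) (use w1le in auto)
          also have "\<dots> \<le> d * \<delta>" using tu by simp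
          also have "\<dots> < d1" by (simp add: d1_def)
          finally show ?thesis using nd by (auto simp: Sgood_def)
        qed
      qed
      then show "Poly_Mapping.keys p \<subseteq> UU gs \<and> (\<exists>h\<in>span_K gs. Poly_Mapping.keys (h - p) \<subseteq> Sgood n Z1 w1 d1)"
        using kp kq h(1) by blast
    qed
    have P2: "set Z1 \<subseteq> set Z0" "distinct Z1" using Z1_sub I2 I3 by (auto simp: Z1_def)
    have P3: "\<forall>k. w1 k < d1" using w1le dd1 le_less_trans by blast
    have P4: "\<forall>z\<in>set Z0 - set Z1. found n gs Z1 w1 z"
    proof
      fix z assume z: "z \<in> set Z0 - set Z1"
      show "found n gs Z1 w1 z"
      proof (cases "z \<in> set Zt")
        case True
        then have zc: "z \<in> set Zc" and vp: "var_poly z \<in> set gs1" by (auto simp: Zt_def)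
        from A vp obtain h where h: "h \<in> span_K gs" "Poly_Mapping.keys (h - var_poly z) \<subseteq> Sgood n Zc w d" by blast
        have nv: "var_term z \<notin> Sgood n Zc w d" using zc by (auto simp: Sgood_def lookup_var_term)
        have "Poly_Mapping.lookup (h - var_poly z) (var_term z) = 0"
          using h(2) nv by (auto simp: in_keys_iff)
        then have l1: "Poly_Mapping.lookup h (var_term z) = 1" by (simp add: Poly_Mapping.lookup_minus lookup_var_poly)
        have l2: "\<forall>u\<in>Poly_Mapping.keys h. u \<noteq> var_term z \<longrightarrow> (\<forall>k\<in>set Z1. Poly_Mapping.lookup u k = 0) \<and> wd n w1 u < w1 z"
        proof (intro ballI impI)
          fix u assume "u \<in> Poly_Mapping.keys h" "u \<noteq> var_term z"
          then have "u \<in> Poly_Mapping.keys (h - var_poly z)" by (simp add: in_keys_iff Poly_Mapping.lookup_minus lookup_var_poly)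
          then have "u \<in> Sgood n Zc w d" using h(2) by blast
          then have u: "\<forall>k\<in>set Zc. Poly_Mapping.lookup u k = 0" "wd n w u < d" by (auto simp: Sgood_def)
          then show "(\<forall>k\<in>set Z1. Poly_Mapping.lookup u k = 0) \<and> wd n w1 u < w1 z"
            using Z1_sub wdeq[OF u(1)] True by (auto simp: w1_def)
        qed
        show ?thesis using h(1) l1 l2 unfolding found_def by blast
      next
        case False
        then have "z \<in> set Z0 - set Zc" using z by (auto simp: Z1_def)
        then have "found n gs Zc w z" using I5 by blast
        then obtain h where h: "h \<in> span_K gs" "Poly_Mapping.lookup h (var_term z) = 1"
          "\<forall>u\<in>Poly_Mapping.keys h. u \<noteq> var_term z \<longrightarrow> (\<forall>k\<in>set Zc. Poly_Mapping.lookup u k = 0) \<and> wd n w u < w z"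
          unfolding found_def by blast
        have "\<forall>u\<in>Poly_Mapping.keys h. u \<noteq> var_term z \<longrightarrow> (\<forall>k\<in>set Z1. Poly_Mapping.lookup u k = 0) \<and> wd n w1 u < w1 z"
        proof (intro ballI impI)
          fix u assume "u \<in> Poly_Mapping.keys h" "u \<noteq> var_term z"
          then have u: "\<forall>k\<in>set Zc. Poly_Mapping.lookup u k = 0" "wd n w u < w z" using h(3) by auto
          then show "(\<forall>k\<in>set Z1. Poly_Mapping.lookup u k = 0) \<and> wd n w1 u < w1 z"
            using Z1_sub wdeq[OF u(1)] False by (auto simp: w1_def)
        qed
        then show ?thesis using h(1,2) unfolding found_def by blast
      qed
    qed
    show ?thesis unfolding body INV_def using P1 P2 P3 P4 by auto
  qed
qed

lemma zero_le_term: "(0::term_) \<le> t"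
proof (cases "t = 0")
  case False
  have ex: "\<exists>k. Poly_Mapping.lookup t k \<noteq> 0"
  proof (rule ccontr)
    assume "\<not> ?thesis"
    then have "t = 0" by (intro poly_mapping_eqI) simp
    with False show False by simp
  qed
  define k where "k = (LEAST k. Poly_Mapping.lookup t k \<noteq> 0)"
  have k1: "Poly_Mapping.lookup t k \<noteq> 0" using LeastI_ex[OF ex] k_def by simp
  have k2: "\<forall>k'<k. Poly_Mapping.lookup t k' = 0" using not_less_Least k_def by blast
  have "less_fun (Poly_Mapping.lookup 0) (Poly_Mapping.lookup t)"
    unfolding less_fun_def using k1 k2 by (intro exI[of _ k]) auto
  then have "0 < t" by (simp add: less_poly_mapping.rep_eq)
  then show ?thesis by simp
qed simp

definition ordW :: "nat list \<Rightarrow> term_ \<Rightarrow> term_ \<Rightarrow> bool" where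
  "ordW W t u \<longleftrightarrow> W_deg W t < W_deg W u \<or> (W_deg W t = W_deg W u \<and> t \<le> u)"

lemma W_deg_add: "W_deg W (t + u) = W_deg W t + W_deg W u"
  by (simp add: W_deg_def Poly_Mapping.lookup_add algebra_simps sum.distrib)

lemma W_deg_zero: "W_deg W 0 = 0"
  by (simp add: W_deg_def)

lemma ordW_term_ordering: "term_ordering n (ordW W)"
  unfolding term_ordering_def ordW_def
  using zero_le_term W_deg_add W_deg_zero
  by (auto simp: add_right_mono intro: order_trans)

lemma ordW_compat: "compatible_with_grading n W (ordW W)"
  unfolding compatible_with_grading_def ordW_def by auto

lemma LT_eq:
  assumes to: "term_ordering n ord" and cg: "compatible_with_grading n W ord"
    and kf: "Poly_Mapping.keys f \<subseteq> terms_in n" and t0: "t0 \<in> Poly_Mapping.keys f"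
    and lt: "\<forall>u\<in>Poly_Mapping.keys f. u \<noteq> t0 \<longrightarrow> W_deg W u < W_deg W t0"
  shows "LT ord f = t0"
  unfolding LT_def
proof (rule the_equality)
  have t0n: "t0 \<in> terms_in n" using kf t0 by blast
  show "t0 \<in> Poly_Mapping.keys f \<and> (\<forall>u\<in>Poly_Mapping.keys f. ord u t0)"
  proof (intro conjI ballI t0)
    fix u assume u: "u \<in> Poly_Mapping.keys f"
    show "ord u t0"
    proof (cases "u = t0")
      case True then show ?thesis using to t0n by (simp add: term_ordering_def)
    next
      case False then show ?thesis using lt u cg kf t0n unfolding compatible_with_grading_def by blast
    qed
  qed
  fix t assume t: "t \<in> Poly_Mapping.keys f \<and> (\<forall>u\<in>Poly_Mapping.keys f. ord u t)"
  show "t = t0"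
  proof (rule ccontr)
    assume ne: "t \<noteq> t0"
    have tn: "t \<in> terms_in n" using kf t by blast
    have "ord t t0" using lt t ne cg kf t0n tn unfolding compatible_with_grading_def by blast
    moreover have "ord t0 t" using t t0 by blast
    ultimately have "t = t0" using to tn t0n unfolding term_ordering_def by blast
    with ne show False ..
  qed
qed

lemma in_span: "i < length gs \<Longrightarrow> gs ! i \<in> span_K gs"
proof -
  assume i: "i < length gs"
  have "(\<Sum>j<length gs. pscale (if j = i then 1 else 0) (gs ! j)) = gs ! i"
  proof (rule poly_mapping_eqI)
    fix t show "Poly_Mapping.lookup (\<Sum>j<length gs. pscale (if j = i then 1 else 0) (gs ! j)) t = Poly_Mapping.lookup (gs ! i) t"
    proof -
      have "Poly_Mapping.lookup (\<Sum>j<length gs. pscale (if j = i then 1 else 0) (gs ! j)) t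
          = (\<Sum>j<length gs. if j = i then Poly_Mapping.lookup (gs ! j) t else 0)"
        unfolding Poly_Mapping.lookup_sum by (rule sum.cong) auto
      also have "\<dots> = Poly_Mapping.lookup (gs ! i) t" using i by simp
      finally show ?thesis .
    qed
  qed
  then show ?thesis unfolding span_K_def by (auto intro!: exI[of _ "\<lambda>j. if j = i then 1 else 0"])
qed

lemma span_keys: "h \<in> span_K gs \<Longrightarrow> Poly_Mapping.keys h \<subseteq> UU gs"
  unfolding span_K_def UU_def using keys_lincomb by fastforce

lemma span_ideal:
  assumes "h \<in> span_K gs" shows "h \<in> ideal_gen n gs"
proof -
  obtain c where h: "h = (\<Sum>j<length gs. pscale (c j) (gs ! j))" using assms by (auto simp: span_K_def)
  have "pscale (c j) (gs ! j) = Poly_Mapping.single 0 (c j) * gs ! j" for j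
    unfolding pscale_def by (rule mult_map_scale_conv_mult)
  moreover have "Poly_Mapping.single 0 (c j) \<in> polys_in n" for j
    by (auto simp: polys_in_def terms_in_def)
  ultimately show ?thesis unfolding ideal_gen_def h
    by (intro CollectI exI[of _ "\<lambda>j. Poly_Mapping.single 0 (c j)"]) auto
qed

lemma W_deg_map: "W_deg (map w [0..<n]) t = wd n w t"
  unfolding W_deg_def wd_def by (rule sum.cong) auto

lemma wd_var_term: "z < n \<Longrightarrow> wd n w (var_term z) = w z"
  by (simp add: wd_def lookup_var_term if_distrib cong: if_cong)

lemma body_decreases:
  assumes "check_running st"
  shows "(case check_body n \<delta> st of (gl, Zc, w, d, s) \<Rightarrow> length Zc + (if s = None then 1 else 0))
       < (case st of (gl, Zc, w, d, s) \<Rightarrow> length Zc + (if s = None then 1 else 0))"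
proof -
  obtain gl Zc w d s where st: "st = (gl, Zc, w, d, s)" by (cases st) auto
  with assms have s: "s = None" by (simp add: check_running_def)
  define Zt where "Zt = filter (\<lambda>z. var_poly z \<in> set (LI n Zc gl)) Zc"
  show ?thesis
  proof (cases "Zt = []")
    case True
    then show ?thesis by (simp add: check_body_def st s Let_def Zt_def[symmetric])
  next
    case False
    then obtain z where "z \<in> set Zt" by (cases Zt) auto
    then have "z \<in> set Zc" by (auto simp: Zt_def)
    then have "length (filter (\<lambda>z. z \<notin> set Zt) Zc) < length Zc"
      using \<open>z \<in> set Zt\<close> by (intro length_filter_less) auto
    then show ?thesis using False by (simp add: check_body_def st s Let_def Zt_def[symmetric])
  qed
qed

theorem mainTheorem2:
  fixes n :: nat and gs :: "('a::field) mpoly list" and Z :: "nat list"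
  assumes "\<forall>g\<in>set gs. g \<in> polys_in n"
    and "distinct Z" and "\<forall>z\<in>set Z. z < n"
  shows "CHECK n gs Z \<noteq> None \<and>
    (\<forall>W. CHECK n gs Z = Some (Weights W) \<longrightarrow>
       length W = n \<and>
       (\<exists>f::nat \<Rightarrow> 'a mpoly.
          (\<forall>i<length Z. f i \<in> span_K gs) \<and>
          (\<forall>ord. term_ordering n ord \<and> compatible_with_grading n W ord \<longrightarrow>
                (\<forall>i<length Z. f i \<noteq> 0 \<and> LT ord (f i) = var_term (Z ! i))) \<and>
          (\<forall>i<length Z. f i \<in> ideal_gen n gs) \<and>
          (\<exists>ord. term_ordering n ord \<and> (\<forall>i<length Z. f i \<noteq> 0 \<and> LT ord (f i) = var_term (Z ! i)))))"
proof -
  define \<delta> where "\<delta> = Max (insert 0 (pdeg ` set gs))"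
  define gs0 where "gs0 = map (del_nondiv Z) gs"
  define st0 :: "'a check_state" where "st0 = (gs0, Z, (\<lambda>_. 0), 1, None)"
  have hU: "\<forall>t\<in>UU gs. tdeg t \<le> \<delta>"
  proof
    fix t assume "t \<in> UU gs"
    then obtain g where g: "g \<in> set gs" "t \<in> Poly_Mapping.keys g" by (auto simp: UU_def)
    have "tdeg t \<le> pdeg g" unfolding pdeg_def using g(2) by (intro Max_ge) auto
    also have "\<dots> \<le> \<delta>" unfolding \<delta>_def using g(1) by (intro Max_ge) auto
    finally show "tdeg t \<le> \<delta>" .
  qed
  have UUn: "UU gs \<subseteq> terms_in n" using assms(1) by (auto simp: UU_def polys_in_def)
  have I1: "\<forall>p\<in>set gs0. Poly_Mapping.keys p \<subseteq> UU gs \<and> (\<exists>h\<in>span_K gs. Poly_Mapping.keys (h - p) \<subseteq> Sgood n Z (\<lambda>_. 0) 1)"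
  proof
    fix p assume "p \<in> set gs0"
    then obtain g where g: "g \<in> set gs" "p = del_nondiv Z g" by (auto simp: gs0_def)
    have "Poly_Mapping.keys p \<subseteq> Poly_Mapping.keys g" using g(2)
      by (auto simp: in_keys_iff lookup_del_nondiv split: if_splits)
    then have k: "Poly_Mapping.keys p \<subseteq> UU gs" using g(1) by (auto simp: UU_def)
    have "g \<in> span_K gs" using g(1) in_span by (metis in_set_conv_nth)
    moreover have "Poly_Mapping.keys (g - p) \<subseteq> Sgood n Z (\<lambda>_. 0) 1"
      using g(2) by (auto simp: in_keys_iff lookup_del_nondiv Poly_Mapping.lookup_minus Sgood_def wd_def split: if_splits)
    ultimately show "Poly_Mapping.keys p \<subseteq> UU gs \<and> (\<exists>h\<in>span_K gs. Poly_Mapping.keys (h - p) \<subseteq> Sgood n Z (\<lambda>_. 0) 1)"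
      using k by blast
  qed
  have inv0: "INV n gs Z st0"
    unfolding INV_def st0_def using I1 assms(2) by auto
  have hterm: "\<exists>t. while_option check_running (check_body n \<delta>) st0 = Some t"
    by (rule measure_while_option_Some[where P="\<lambda>_. True" and
          f="\<lambda>st. case st of (gl, Zc, w, d, s) \<Rightarrow> length Zc + (if s = None then 1 else 0)"])
       (simp_all add: body_decreases)
  have CH: "CHECK n gs Z = (if dim_span_K (map Lin gs0) < length Z then Some Fail
         else (case while_option check_running (check_body n \<delta>) st0 of
                 None \<Rightarrow> None
               | Some (_, _, w, _, s) \<Rightarrow>
                   Some (if s = Some True then Weights (map w [0..<n]) else Fail)))"
    by (simp add: CHECK_def Let_def \<delta>_def gs0_def st0_def)
  obtain tf where tf: "while_option check_running (check_body n \<delta>) st0 = Some tf" using hterm by blast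
  have invf: "INV n gs Z tf"
    using while_option_rule[where P="INV n gs Z", OF _ tf inv0] step_inv[OF _ _ hU] by blast
  have part1: "CHECK n gs Z \<noteq> None"
    using CH tf by (auto split: prod.splits)
  have part2: "length W = n \<and>
       (\<exists>f::nat \<Rightarrow> 'a mpoly.
          (\<forall>i<length Z. f i \<in> span_K gs) \<and>
          (\<forall>ord. term_ordering n ord \<and> compatible_with_grading n W ord \<longrightarrow>
                (\<forall>i<length Z. f i \<noteq> 0 \<and> LT ord (f i) = var_term (Z ! i))) \<and>
          (\<forall>i<length Z. f i \<in> ideal_gen n gs) \<and>
          (\<exists>ord. term_ordering n ord \<and> (\<forall>i<length Z. f i \<noteq> 0 \<and> LT ord (f i) = var_term (Z ! i))))"
    if CW: "CHECK n gs Z = Some (Weights W)" for W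
  proof -
    obtain gl Zc w d s where tfe: "tf = (gl, Zc, w, d, s)" by (cases tf) auto
    from CW CH tf tfe have sT: "s = Some True" and W: "W = map w [0..<n]"
      by (auto split: if_splits)
    from invf tfe sT have Zc: "Zc = []" and fd: "\<forall>z\<in>set Z. found n gs [] w z"
      by (auto simp: INV_def)
    have "\<forall>i. \<exists>h. i < length Z \<longrightarrow> h \<in> span_K gs \<and> Poly_Mapping.lookup h (var_term (Z ! i)) = 1 \<and>
        (\<forall>u\<in>Poly_Mapping.keys h. u \<noteq> var_term (Z ! i) \<longrightarrow> wd n w u < w (Z ! i))"
      using fd unfolding found_def by (meson nth_mem)
    then obtain f where f: "\<And>i. i < length Z \<Longrightarrow> f i \<in> span_K gs \<and> Poly_Mapping.lookup (f i) (var_term (Z ! i)) = 1 \<and>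
        (\<forall>u\<in>Poly_Mapping.keys (f i). u \<noteq> var_term (Z ! i) \<longrightarrow> wd n w u < w (Z ! i))"
      by metis
    have LTok: "f i \<noteq> 0 \<and> LT ord (f i) = var_term (Z ! i)"
      if ord: "term_ordering n ord" "compatible_with_grading n W ord" and i: "i < length Z" for ord i
    proof -
      have fi: "f i \<in> span_K gs" "Poly_Mapping.lookup (f i) (var_term (Z ! i)) = 1"
        "\<forall>u\<in>Poly_Mapping.keys (f i). u \<noteq> var_term (Z ! i) \<longrightarrow> wd n w u < w (Z ! i)"
        using f[OF i] by auto
      have zn: "Z ! i < n" using assms(3) i by auto
      have ne: "f i \<noteq> 0" using fi(2) by auto
      have "LT ord (f i) = var_term (Z ! i)"
      proof (rule LT_eq[OF ord])
        show "Poly_Mapping.keys (f i) \<subseteq> terms_in n" using span_keys[OF fi(1)] UUn by blast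
        show "var_term (Z ! i) \<in> Poly_Mapping.keys (f i)" using fi(2) by (simp add: in_keys_iff)
        show "\<forall>u\<in>Poly_Mapping.keys (f i). u \<noteq> var_term (Z ! i) \<longrightarrow> W_deg W u < W_deg W (var_term (Z ! i))"
          using fi(3) zn by (simp add: W W_deg_map wd_var_term)
      qed
      with ne show ?thesis by blast
    qed
    show ?thesis
    proof (intro conjI exI[of _ f])
      show "length W = n" by (simp add: W)
      show "\<forall>i<length Z. f i \<in> span_K gs" using f by blast
      show "\<forall>ord. term_ordering n ord \<and> compatible_with_grading n W ord \<longrightarrow>
                (\<forall>i<length Z. f i \<noteq> 0 \<and> LT ord (f i) = var_term (Z ! i))"
        using LTok by blast
      show "\<forall>i<length Z. f i \<in> ideal_gen n gs" using f span_ideal by blast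
      show "\<exists>ord. term_ordering n ord \<and> (\<forall>i<length Z. f i \<noteq> 0 \<and> LT ord (f i) = var_term (Z ! i))"
        using LTok ordW_term_ordering ordW_compat by blast
    qed
  qed
  show ?thesis using part1 part2 by blast
qed

end
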